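(* Consider a Markov decision process with state space $\mathcal{S}$, action space $\mathcal{A}$, and discount factor $\gamma$. Let $s \in \mathcal{S}$ be a state, let $\pi, \hat\pi : \mathcal{S} \to \Delta(\mathcal{A})$ be policies, and let $f : \mathbb{R} \to \mathbb{R}$ be a bounded, measurable, non-negative, non-decreasing function. Suppose that $\pi(a \mid s) = f(A_{\hat\pi}(s,a))\,\hat\pi(a \mid s)$ and $\mathbb{E}_{a \sim \hat\pi(\cdot \mid s)}[f(A_{\hat\pi}(s,a))] = 1$. Then $$\mathbb{E}_{a \sim \pi(\cdot \mid s)}[Q_{\hat\pi}(s,a)] \geq V_{\hat\pi}(s).$$
   Context: $\Delta(\mathcal{A})$ denotes the set of probability distributions on $\mathcal{A}$; a policy assigns to each state a distribution over actions. For a policy $\hat\pi$, $Q_{\hat\pi}(s,a)$ is the expected discounted sum of future rewards obtained by starting in state $s$, taking action $a$, and following $\hat\pi$ thereafter; $V_{\hat\pi}(s) = \mathbb{E}_{a \sim \hat\pi(\cdot\mid s)}[Q_{\hat\pi}(s,a)]$ is the expected discounted sum of future rewards starting from $s$ and following $\hat\pi$; and $A_{\hat\pi}(s,a) = Q_{\hat\pi}(s,a) - V_{\hat\pi}(s)$ is the advantage. The equation $\pi(a\mid s) = f(A_{\hat\pi}(s,a))\hat\pi(a\mid s)$ is understood as $\pi(\cdot\mid s)$ having density $a \mapsto f(A_{\hat\pi}(s,a))$ with respect to $\hat\pi(\cdot\mid s)$. *)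

theory Defs
  imports "HOL-Probability.Probability"
begin

text \<open>The action-value function of a policy is the expected discounted
sum of rewards; for bounded rewards and gamma < 1 it is the limit of the
n-step truncated expected discounted returns Qn, given by the finite-horizon
Bellman recursion below.\<close>

fun Qn :: "('s \<Rightarrow> 'a \<Rightarrow> real) \<Rightarrow> ('s \<Rightarrow> 'a \<Rightarrow> 's measure) \<Rightarrow> real \<Rightarrow> ('s \<Rightarrow> 'a measure)
           \<Rightarrow> nat \<Rightarrow> 's \<Rightarrow> 'a \<Rightarrow> real" where
  "Qn r P \<gamma> \<pi> 0 s a = 0"
| "Qn r P \<gamma> \<pi> (Suc n) s a =
     r s a + \<gamma> * (\<integral>s'. (\<integral>a'. Qn r P \<gamma> \<pi> n s' a' \<partial>(\<pi> s')) \<partial>(P s a))"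

definition Qfun :: "('s \<Rightarrow> 'a \<Rightarrow> real) \<Rightarrow> ('s \<Rightarrow> 'a \<Rightarrow> 's measure) \<Rightarrow> real \<Rightarrow> ('s \<Rightarrow> 'a measure)
           \<Rightarrow> 's \<Rightarrow> 'a \<Rightarrow> real" where
  "Qfun r P \<gamma> \<pi> s a = lim (\<lambda>n. Qn r P \<gamma> \<pi> n s a)"

definition Vfun :: "('s \<Rightarrow> 'a \<Rightarrow> real) \<Rightarrow> ('s \<Rightarrow> 'a \<Rightarrow> 's measure) \<Rightarrow> real \<Rightarrow> ('s \<Rightarrow> 'a measure)
           \<Rightarrow> 's \<Rightarrow> real" where
  "Vfun r P \<gamma> \<pi> s = (\<integral>a. Qfun r P \<gamma> \<pi> s a \<partial>(\<pi> s))"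

definition Afun :: "('s \<Rightarrow> 'a \<Rightarrow> real) \<Rightarrow> ('s \<Rightarrow> 'a \<Rightarrow> 's measure) \<Rightarrow> real \<Rightarrow> ('s \<Rightarrow> 'a measure)
           \<Rightarrow> 's \<Rightarrow> 'a \<Rightarrow> real" where
  "Afun r P \<gamma> \<pi> s a = Qfun r P \<gamma> \<pi> s a - Vfun r P \<gamma> \<pi> s"

definition is_policy :: "'s measure \<Rightarrow> 'a measure \<Rightarrow> ('s \<Rightarrow> 'a measure) \<Rightarrow> bool" where
  "is_policy S A \<pi> \<longleftrightarrow> \<pi> \<in> measurable S (prob_algebra A)"

definition is_MDP :: "'s measure \<Rightarrow> 'a measure \<Rightarrow> ('s \<Rightarrow> 'a \<Rightarrow> real) \<Rightarrow> ('s \<Rightarrow> 'a \<Rightarrow> 's measure)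
                      \<Rightarrow> real \<Rightarrow> bool" where
  "is_MDP S A r P \<gamma> \<longleftrightarrow>
     (\<lambda>(s, a). r s a) \<in> borel_measurable (S \<Otimes>\<^sub>M A) \<and>
     (\<exists>B. \<forall>s\<in>space S. \<forall>a\<in>space A. \<bar>r s a\<bar> \<le> B) \<and>
     (\<lambda>(s, a). P s a) \<in> measurable (S \<Otimes>\<^sub>M A) (prob_algebra S) \<and>
     0 \<le> \<gamma> \<and> \<gamma> < 1"

end

theory Submission imports Defs begin

lemma curry_meas:
  assumes "(\<lambda>(x,y). f x y) \<in> borel_measurable (M \<Otimes>\<^sub>M N)" "x \<in> space M"
  shows "f x \<in> borel_measurable N"
  using measurable_compose[OF measurable_Pair1'[OF assms(2)] assms(1)] by simp

lemma bound_integral: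
  fixes g :: "'x \<Rightarrow> real"
  assumes "prob_space M" "\<And>x. x \<in> space M \<Longrightarrow> \<bar>g x\<bar> \<le> C"
  shows "\<bar>\<integral>x. g x \<partial>M\<bar> \<le> C"
proof (cases "integrable M g")
  case True
  have "\<bar>\<integral>x. g x \<partial>M\<bar> \<le> (\<integral>x. \<bar>g x\<bar> \<partial>M)" by (rule integral_abs_bound)
  also have "\<dots> \<le> C"
    using True assms by (intro prob_space.integral_le_const) auto
  finally show ?thesis .
next
  case False
  obtain x where "x \<in> space M" using prob_space.not_empty[OF assms(1)] by auto
  then have "0 \<le> C" using assms(2)[of x] by auto
  then show ?thesis using False by (simp add: not_integrable_integral_eq)
qed

lemma kernel_integral_meas:
  fixes f :: "'x \<Rightarrow> 'y \<Rightarrow> real"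
  assumes f[measurable]: "(\<lambda>(x,y). f x y) \<in> borel_measurable (M \<Otimes>\<^sub>M N)"
  and L[measurable]: "L \<in> M \<rightarrow>\<^sub>M subprob_algebra N"
  and bnd: "\<And>x y. x \<in> space M \<Longrightarrow> y \<in> space N \<Longrightarrow> \<bar>f x y\<bar> \<le> C"
  shows "(\<lambda>x. \<integral>y. f x y \<partial>L x) \<in> borel_measurable M"
proof -
  have meas: "(\<lambda>x. enn2real (\<integral>\<^sup>+y. ennreal (f x y) \<partial>L x) - enn2real (\<integral>\<^sup>+y. ennreal (- f x y) \<partial>L x))
     \<in> borel_measurable M"
    by (intro borel_measurable_diff borel_measurable_enn2real nn_integral_measurable_subprob_algebra2[where N=N]) (auto simp: case_prod_beta)
  have eqx: "(\<integral>y. f x y \<partial>L x) = enn2real (\<integral>\<^sup>+y. ennreal (f x y) \<partial>L x) - enn2real (\<integral>\<^sup>+y. ennreal (- f x y) \<partial>L x)"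
    if x: "x \<in> space M" for x
  proof -
    have Lx: "L x \<in> space (subprob_algebra N)" using measurable_space[OF L x] .
    then have ss: "subprob_space (L x)" "sets (L x) = sets N" by (auto simp: space_subprob_algebra)
    then interpret subprob_space "L x" by simp
    have sp: "space (L x) = space N" using ss(2) by (rule sets_eq_imp_space_eq)
    have "f x \<in> borel_measurable N" using curry_meas[OF f x] .
    then have m: "f x \<in> borel_measurable (L x)" unfolding measurable_cong_sets[OF ss(2) refl] .
    have "integrable (L x) (f x)"
      by (rule integrable_const_bound[where B=C]) (use m bnd[OF x] sp in auto)
    then show ?thesis by (rule real_lebesgue_integral_def)
  qed
  show ?thesis using iffD2[OF measurable_cong[OF eqx] meas] .
qed

locale mdpctx =
  fixes S :: "'s measure" and A :: "'a measure" and r :: "'s \<Rightarrow> 'a \<Rightarrow> real"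
    and P :: "'s \<Rightarrow> 'a \<Rightarrow> 's measure" and \<gamma> :: real and \<pi>h :: "'s \<Rightarrow> 'a measure" and B :: real
  assumes rm[measurable]: "(\<lambda>(s,a). r s a) \<in> borel_measurable (S \<Otimes>\<^sub>M A)"
    and rb: "\<And>s a. s \<in> space S \<Longrightarrow> a \<in> space A \<Longrightarrow> \<bar>r s a\<bar> \<le> B"
    and Pm: "(\<lambda>(s,a). P s a) \<in> S \<Otimes>\<^sub>M A \<rightarrow>\<^sub>M prob_algebra S"
    and pim: "\<pi>h \<in> S \<rightarrow>\<^sub>M prob_algebra A"
    and g0: "0 \<le> \<gamma>" and g1: "\<gamma> < 1" and B0: "0 \<le> B"
begin

abbreviation "Q n \<equiv> Qn r P \<gamma> \<pi>h n"
definition "C = B / (1 - \<gamma>)"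

lemma C_eq: "B + \<gamma> * C = C"
  using g1 unfolding C_def by (simp add: field_simps)

lemma C0: "0 \<le> C" using g1 B0 unfolding C_def by simp

lemma P_sp:
  assumes "s \<in> space S" "a \<in> space A"
  shows "prob_space (P s a)" "sets (P s a) = sets S" "space (P s a) = space S"
proof -
  have "(s,a) \<in> space (S \<Otimes>\<^sub>M A)" using assms by (simp add: space_pair_measure)
  from measurable_space[OF Pm this] show "prob_space (P s a)" and ss: "sets (P s a) = sets S"
    by (auto simp: space_prob_algebra)
  from ss show "space (P s a) = space S" by (rule sets_eq_imp_space_eq)
qed

lemma pi_sp:
  assumes "s \<in> space S"
  shows "prob_space (\<pi>h s)" "sets (\<pi>h s) = sets A" "space (\<pi>h s) = space A"
proof -
  from measurable_space[OF pim assms] show "prob_space (\<pi>h s)" and ss: "sets (\<pi>h s) = sets A"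
    by (auto simp: space_prob_algebra)
  from ss show "space (\<pi>h s) = space A" by (rule sets_eq_imp_space_eq)
qed

lemma Pm': "(\<lambda>x. P (fst x) (snd x)) \<in> S \<Otimes>\<^sub>M A \<rightarrow>\<^sub>M subprob_algebra S"
  using measurable_prob_algebraD[OF Pm] by (simp add: case_prod_beta)

lemma pim': "\<pi>h \<in> S \<rightarrow>\<^sub>M subprob_algebra A"
  using measurable_prob_algebraD[OF pim] .

lemma QMB: "(\<lambda>(s,a). Q n s a) \<in> borel_measurable (S \<Otimes>\<^sub>M A) \<and>
   (\<forall>s\<in>space S. \<forall>a\<in>space A. \<bar>Q n s a\<bar> \<le> C)"
proof (induction n)
  case 0
  then show ?case using C0 by simp
next
  case (Suc n)
  define g where "g s' = (\<integral>a'. Q n s' a' \<partial>\<pi>h s')" for s'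
  have gm: "g \<in> borel_measurable S"
    unfolding g_def using Suc.IH by (intro kernel_integral_meas[OF _ pim', where C=C]) auto
  have gb: "\<bar>g s'\<bar> \<le> C" if "s' \<in> space S" for s'
    unfolding g_def using Suc.IH that pi_sp[OF that] by (intro bound_integral) auto
  have gm2: "(\<lambda>(x, y). g y) \<in> borel_measurable ((S \<Otimes>\<^sub>M A) \<Otimes>\<^sub>M S)"
  proof -
    have e: "(\<lambda>(x, y). g y) = g \<circ> snd" by auto
    show ?thesis unfolding e by (rule measurable_comp[OF measurable_snd gm])
  qed
  have hm: "(\<lambda>x. \<integral>s'. g s' \<partial>P (fst x) (snd x)) \<in> borel_measurable (S \<Otimes>\<^sub>M A)"
    by (rule kernel_integral_meas[OF gm2 Pm', where C=C]) (use gb in auto)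
  have hb: "\<bar>\<integral>s'. g s' \<partial>P s a\<bar> \<le> C" if "s \<in> space S" "a \<in> space A" for s a
    using gb P_sp[OF that] by (intro bound_integral) auto
  have eq: "(\<lambda>(s,a). Q (Suc n) s a) = (\<lambda>x. (\<lambda>(s,a). r s a) x + \<gamma> * (\<integral>s'. g s' \<partial>P (fst x) (snd x)))"
    by (auto simp: g_def case_prod_beta)
  have "(\<lambda>(s,a). Q (Suc n) s a) \<in> borel_measurable (S \<Otimes>\<^sub>M A)"
    unfolding eq by (intro borel_measurable_add borel_measurable_times borel_measurable_const rm hm)
  moreover have "\<bar>Q (Suc n) s a\<bar> \<le> C" if "s \<in> space S" "a \<in> space A" for s a
  proof -
    have "\<bar>Q (Suc n) s a\<bar> = \<bar>r s a + \<gamma> * (\<integral>s'. g s' \<partial>P s a)\<bar>" by (simp add: g_def)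
    also have "\<dots> \<le> \<bar>r s a\<bar> + \<gamma> * \<bar>\<integral>s'. g s' \<partial>P s a\<bar>" using g0 abs_triangle_ineq[of "r s a" "\<gamma> * (\<integral>s'. g s' \<partial>P s a)"] by (simp add: abs_mult)
    also have "\<dots> \<le> B + \<gamma> * C" using rb[OF that] hb[OF that] g0 by (intro add_mono mult_left_mono) auto
    finally show ?thesis using C_eq by simp
  qed
  ultimately show ?case by blast
qed

lemma Qm: "(\<lambda>(s,a). Q n s a) \<in> borel_measurable (S \<Otimes>\<^sub>M A)" using QMB by blast
lemma Qb: "s \<in> space S \<Longrightarrow> a \<in> space A \<Longrightarrow> \<bar>Q n s a\<bar> \<le> C" using QMB by blast

lemma Q_int: "s \<in> space S \<Longrightarrow> integrable (\<pi>h s) (Q n s)"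
proof -
  assume s: "s \<in> space S"
  interpret prob_space "\<pi>h s" using pi_sp[OF s] by simp
  have "Q n s \<in> borel_measurable (\<pi>h s)"
    unfolding measurable_cong_sets[OF pi_sp(2)[OF s] refl] by (rule curry_meas[OF Qm s])
  moreover have "AE x in \<pi>h s. norm (Q n s x) \<le> C"
    by (rule AE_I2) (use Qb[OF s] pi_sp(3)[OF s] in simp)
  ultimately show ?thesis
    by (intro integrable_const_bound[where B=C])
qed

lemma g_int: "s \<in> space S \<Longrightarrow> a \<in> space A \<Longrightarrow> integrable (P s a) (\<lambda>s'. \<integral>a'. Q n s' a' \<partial>\<pi>h s')"
proof -
  assume s: "s \<in> space S" and a: "a \<in> space A"
  interpret prob_space "P s a" using P_sp[OF s a] by simp
  have "(\<lambda>s'. \<integral>a'. Q n s' a' \<partial>\<pi>h s') \<in> borel_measurable S"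
    using Qm Qb by (intro kernel_integral_meas[OF _ pim', where C=C]) auto
  then have "(\<lambda>s'. \<integral>a'. Q n s' a' \<partial>\<pi>h s') \<in> borel_measurable (P s a)"
    unfolding measurable_cong_sets[OF P_sp(2)[OF s a] refl] .
  moreover have b: "\<bar>\<integral>a'. Q n s' a' \<partial>\<pi>h s'\<bar> \<le> C" if "s' \<in> space S" for s'
    by (rule bound_integral[OF pi_sp(1)[OF that]]) (use Qb[OF that] pi_sp(3)[OF that] in simp)
  moreover have "AE x in P s a. norm (\<integral>a'. Q n x a' \<partial>\<pi>h x) \<le> C"
    by (rule AE_I2) (use b P_sp(3)[OF s a] in simp)
  ultimately show ?thesis
    by (intro integrable_const_bound[where B=C])
qed

lemma D_bound: "s \<in> space S \<Longrightarrow> a \<in> space A \<Longrightarrow> \<bar>Q (Suc n) s a - Q n s a\<bar> \<le> B * \<gamma> ^ n"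
proof (induction n arbitrary: s a)
  case 0
  have "Q 0 s' = (\<lambda>a. 0)" for s' by (rule ext) simp
  then show ?case using rb 0 by simp
next
  case (Suc n)
  have inner: "(\<integral>a'. Q (Suc n) s' a' \<partial>\<pi>h s') - (\<integral>a'. Q n s' a' \<partial>\<pi>h s')
      = (\<integral>a'. Q (Suc n) s' a' - Q n s' a' \<partial>\<pi>h s')" if "s' \<in> space S" for s'
    using Q_int[OF that, of "Suc n"] Q_int[OF that, of n] by (rule Bochner_Integration.integral_diff[symmetric])
  have ib: "\<bar>\<integral>a'. Q (Suc n) s' a' - Q n s' a' \<partial>\<pi>h s'\<bar> \<le> B * \<gamma> ^ n" if "s' \<in> space S" for s'
    using Suc.IH[OF that] pi_sp[OF that] by (intro bound_integral) (auto simp del: Qn.simps)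
  have "Q (Suc (Suc n)) s a - Q (Suc n) s a =
     \<gamma> * ((\<integral>s'. (\<integral>a'. Q (Suc n) s' a' \<partial>\<pi>h s') \<partial>P s a) - (\<integral>s'. (\<integral>a'. Q n s' a' \<partial>\<pi>h s') \<partial>P s a))"
    unfolding Qn.simps(2)[of r P \<gamma> \<pi>h "Suc n" s a] Qn.simps(2)[of r P \<gamma> \<pi>h n s a]
    by (simp add: algebra_simps del: Qn.simps)
  also have "\<dots> = \<gamma> * (\<integral>s'. (\<integral>a'. Q (Suc n) s' a' \<partial>\<pi>h s') - (\<integral>a'. Q n s' a' \<partial>\<pi>h s') \<partial>P s a)"
    by (subst Bochner_Integration.integral_diff) (use g_int[OF Suc.prems] in \<open>simp_all del: Qn.simps\<close>)
  also have "\<dots> = \<gamma> * (\<integral>s'. (\<integral>a'. Q (Suc n) s' a' - Q n s' a' \<partial>\<pi>h s') \<partial>P s a)"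
    using inner P_sp(3)[OF Suc.prems] by (intro arg_cong[where f="\<lambda>x. \<gamma> * x"] Bochner_Integration.integral_cong) (auto simp del: Qn.simps)
  finally have eq: "Q (Suc (Suc n)) s a - Q (Suc n) s a = \<gamma> * (\<integral>s'. (\<integral>a'. Q (Suc n) s' a' - Q n s' a' \<partial>\<pi>h s') \<partial>P s a)" .
  have "\<bar>\<integral>s'. (\<integral>a'. Q (Suc n) s' a' - Q n s' a' \<partial>\<pi>h s') \<partial>P s a\<bar> \<le> B * \<gamma> ^ n"
    using ib P_sp[OF Suc.prems] by (intro bound_integral[where g="\<lambda>s'. (\<integral>a'. Q (Suc n) s' a' - Q n s' a' \<partial>\<pi>h s')"]) (auto simp del: Qn.simps)
  then have "\<gamma> * \<bar>\<integral>s'. (\<integral>a'. Q (Suc n) s' a' - Q n s' a' \<partial>\<pi>h s') \<partial>P s a\<bar> \<le> \<gamma> * (B * \<gamma> ^ n)"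
    using g0 by (rule mult_left_mono)
  then show ?case unfolding eq using g0 by (simp add: abs_mult algebra_simps del: Qn.simps)
qed

lemma Q_lim: assumes "s \<in> space S" "a \<in> space A"
  shows "(\<lambda>n. Q n s a) \<longlonglongrightarrow> Qfun r P \<gamma> \<pi>h s a"
proof -
  let ?D = "\<lambda>k. Q (Suc k) s a - Q k s a"
  have "summable (\<lambda>k. B * \<gamma> ^ k)" using g0 g1 by (intro summable_mult summable_geometric) auto
  then have "summable ?D"
    by (rule summable_comparison_test'[where N=0]) (use D_bound[OF assms] in auto)
  note sm = this
  have tel: "(\<Sum>i<n. Q (Suc i) s a - Q i s a) = Q n s a" for n
    by (induction n) (simp_all del: Qn.simps(2))
  from summable_LIMSEQ[OF sm] have "(\<lambda>n. Q n s a) \<longlonglongrightarrow> suminf ?D"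
    by (simp only: tel)
  then show ?thesis unfolding Qfun_def by (simp add: limI)
qed

lemma Qfm: "(\<lambda>(s,a). Qfun r P \<gamma> \<pi>h s a) \<in> borel_measurable (S \<Otimes>\<^sub>M A)"
  by (rule borel_measurable_LIMSEQ_metric[where f="\<lambda>n (s,a). Q n s a", OF Qm])
     (auto simp: space_pair_measure intro: Q_lim)

lemma Qfb: assumes "s \<in> space S" "a \<in> space A" shows "\<bar>Qfun r P \<gamma> \<pi>h s a\<bar> \<le> C"
  by (rule LIMSEQ_le_const2[OF tendsto_rabs[OF Q_lim[OF assms]]]) (use Qb[OF assms] in auto)

end

theorem lemmaA2:
  fixes S :: "'s measure" and A :: "'a measure"
    and r :: "'s \<Rightarrow> 'a \<Rightarrow> real" and P :: "'s \<Rightarrow> 'a \<Rightarrow> 's measure" and \<gamma> :: real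
    and \<pi> \<pi>h :: "'s \<Rightarrow> 'a measure" and f :: "real \<Rightarrow> real" and s :: 's
  assumes mdp: "is_MDP S A r P \<gamma>"
    and pol: "is_policy S A \<pi>" "is_policy S A \<pi>h"
    and s: "s \<in> space S"
    and f_bdd: "\<exists>B. \<forall>x. f x \<le> B"
    and f_meas: "f \<in> borel_measurable borel"
    and f_nonneg: "\<And>x. 0 \<le> f x"
    and f_mono: "mono f"
    and dens: "\<pi> s = density (\<pi>h s) (\<lambda>a. ennreal (f (Afun r P \<gamma> \<pi>h s a)))"
    and norm: "(\<integral>a. f (Afun r P \<gamma> \<pi>h s a) \<partial>(\<pi>h s)) = 1"
  shows "(\<integral>a. Qfun r P \<gamma> \<pi>h s a \<partial>(\<pi> s)) \<ge> Vfun r P \<gamma> \<pi>h s"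
proof -
  have mdp': "(\<lambda>(s, a). r s a) \<in> borel_measurable (S \<Otimes>\<^sub>M A) \<and>
     (\<exists>B. \<forall>s\<in>space S. \<forall>a\<in>space A. \<bar>r s a\<bar> \<le> B) \<and>
     (\<lambda>(s, a). P s a) \<in> measurable (S \<Otimes>\<^sub>M A) (prob_algebra S) \<and>
     0 \<le> \<gamma> \<and> \<gamma> < 1" using mdp unfolding is_MDP_def .
  then obtain B where rm: "(\<lambda>(s, a). r s a) \<in> borel_measurable (S \<Otimes>\<^sub>M A)"
    and rb: "\<forall>s\<in>space S. \<forall>a\<in>space A. \<bar>r s a\<bar> \<le> B"
    and Pm: "(\<lambda>(s, a). P s a) \<in> measurable (S \<Otimes>\<^sub>M A) (prob_algebra S)"
    and g0: "0 \<le> \<gamma>" and g1: "\<gamma> < 1"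
    by (elim conjE exE)
  have pim0: "\<pi>h \<in> S \<rightarrow>\<^sub>M prob_algebra A" using pol(2) unfolding is_policy_def .
  have rb': "\<bar>r s a\<bar> \<le> max B 0" if "s \<in> space S" "a \<in> space A" for s a
    using rb that by (meson max.coboundedI1 bspec)
  interpret mdpctx S A r P \<gamma> \<pi>h "max B 0"
    by (rule mdpctx.intro[OF rm rb' Pm pim0 g0 g1]) simp_all
  obtain Bf where Bf: "\<And>x. f x \<le> Bf" using f_bdd by blast
  define M where "M = \<pi>h s"
  define q where "q = Qfun r P \<gamma> \<pi>h s"
  define V where "V = Vfun r P \<gamma> \<pi>h s"
  define w where "w a = f (q a - V)" for a
  interpret prob_space M unfolding M_def using pi_sp[OF s] by simp
  have spM: "space M = space A" and sM: "sets M = sets A" using pi_sp[OF s] unfolding M_def by auto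
  have qm: "q \<in> borel_measurable M"
    unfolding measurable_cong_sets[OF sM refl] q_def by (rule curry_meas[OF Qfm s])
  have qb: "\<bar>q a\<bar> \<le> C" if "a \<in> space M" for a
    using Qfb[OF s] that spM unfolding q_def by auto
  have V_eq: "V = (\<integral>a. q a \<partial>M)" unfolding V_def Vfun_def q_def M_def ..
  have wm: "w \<in> borel_measurable M"
    unfolding w_def by (rule measurable_compose[OF borel_measurable_diff[OF qm borel_measurable_const] f_meas])
  have Af: "Afun r P \<gamma> \<pi>h s a = q a - V" for a unfolding Afun_def q_def V_def ..
  have q_int: "integrable M q"
    by (rule integrable_const_bound[where B=C, OF AE_I2]) (use qm qb in simp_all)
  have w_int: "integrable M w"
  proof (rule integrable_const_bound[where B="\<bar>Bf\<bar>", OF AE_I2])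
    fix a show "norm (w a) \<le> \<bar>Bf\<bar>" using Bf[of "q a - V"] f_nonneg[of "q a - V"] unfolding w_def by simp
  qed (rule wm)
  have wq_int: "integrable M (\<lambda>a. w a * q a)"
  proof (rule integrable_const_bound[where B="\<bar>Bf\<bar> * C"])
    show "(\<lambda>a. w a * q a) \<in> borel_measurable M" using wm qm by (rule borel_measurable_times)
    have "norm (w a * q a) \<le> \<bar>Bf\<bar> * C" if "a \<in> space M" for a
    proof -
      have "norm (w a * q a) = \<bar>w a\<bar> * \<bar>q a\<bar>" by (simp add: abs_mult)
      also have "\<dots> \<le> \<bar>Bf\<bar> * C"
      proof (rule mult_mono)
        show "\<bar>w a\<bar> \<le> \<bar>Bf\<bar>" using Bf[of "q a - V"] f_nonneg[of "q a - V"] unfolding w_def by linarith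
        show "\<bar>q a\<bar> \<le> C" using qb[OF that] .
      qed auto
      finally show ?thesis .
    qed
    then show "AE a in M. norm (w a * q a) \<le> \<bar>Bf\<bar> * C" by (intro AE_I2)
  qed
  have w1: "(\<integral>a. w a \<partial>M) = 1" using norm unfolding w_def M_def Af .
  have pis: "\<pi> s = density M (\<lambda>a. ennreal (w a))" unfolding dens M_def w_def Af ..
  have wq: "(\<integral>a. q a \<partial>density M (\<lambda>a. ennreal (w a))) = (\<integral>a. w a *\<^sub>R q a \<partial>M)"
    by (rule integral_density[OF qm wm AE_I2]) (simp add: w_def f_nonneg)
  have lhs: "(\<integral>a. Qfun r P \<gamma> \<pi>h s a \<partial>(\<pi> s)) = (\<integral>a. w a * q a \<partial>M)"
    unfolding pis q_def[symmetric] wq by simp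
  have ext1: "(\<lambda>a. w a * (q a - V)) = (\<lambda>a. w a * q a - w a * V)"
    by (rule ext) (simp only: right_diff_distrib)
  have wV_int: "integrable M (\<lambda>a. w a * V)" by (rule integrable_mult_left) (rule w_int)
  have wqV_int: "integrable M (\<lambda>a. w a * (q a - V))"
    unfolding ext1 by (rule Bochner_Integration.integrable_diff[OF wq_int wV_int])
  have step1: "(\<integral>a. w a * (q a - V) \<partial>M) = (\<integral>a. w a * q a \<partial>M) - V"
  proof -
    have "(\<integral>a. w a * (q a - V) \<partial>M) = (\<integral>a. w a * q a \<partial>M) - (\<integral>a. w a * V \<partial>M)"
      unfolding ext1 by (rule Bochner_Integration.integral_diff[OF wq_int wV_int])
    also have "(\<integral>a. w a * V \<partial>M) = (\<integral>a. w a \<partial>M) * V" by (rule integral_mult_left_zero)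
    finally show ?thesis unfolding w1 by simp
  qed
  have c_int: "integrable M (\<lambda>a. f 0 * (q a - V))"
    by (rule integrable_mult_right, rule Bochner_Integration.integrable_diff[OF q_int integrable_const])
  have step2: "(\<integral>a. w a * (q a - V) \<partial>M) \<ge> (\<integral>a. f 0 * (q a - V) \<partial>M)"
  proof (rule integral_mono[OF c_int wqV_int])
    fix a
    show "f 0 * (q a - V) \<le> w a * (q a - V)"
    proof (cases "q a - V \<ge> 0")
      case True
      have "f 0 \<le> w a" unfolding w_def using monoD[OF f_mono True] .
      then show ?thesis using True by (rule mult_right_mono)
    next
      case False
      then have "q a - V \<le> 0" by simp
      have "w a \<le> f 0" unfolding w_def using monoD[OF f_mono \<open>q a - V \<le> 0\<close>] .
      then show ?thesis using \<open>q a - V \<le> 0\<close> by (rule mult_right_mono_neg)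
    qed
  qed
  have step3: "(\<integral>a. f 0 * (q a - V) \<partial>M) = 0"
  proof -
    have "(\<integral>a. f 0 * (q a - V) \<partial>M) = f 0 * (\<integral>a. q a - V \<partial>M)" by (rule integral_mult_right_zero)
    also have "(\<integral>a. q a - V \<partial>M) = (\<integral>a. q a \<partial>M) - (\<integral>a. V \<partial>M)"
      by (rule Bochner_Integration.integral_diff[OF q_int integrable_const])
    also have "(\<integral>a. V \<partial>M) = V" by (simp add: prob_space)
    finally show ?thesis unfolding V_eq[symmetric] by simp
  qed
  show ?thesis using lhs step1 step2 step3 unfolding V_def[symmetric] by linarith
qed

end
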